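(* For every program $P$, all terms $s,t$ and all $w\in P^*$, if $s\hookrightarrow_w t$ then $\langle s\rangle\leadsto_w\langle t\rangle$.
   Context: Fix a signature $\Sigma$ and a countably infinite set $X$ of variables disjoint from $\Sigma$; terms are elements of $T(\Sigma,X)$, goals are finite sequences $\langle s_1,\dots,s_n\rangle$ of terms, substitutions are maps $X\to T(\Sigma,X)$ moving finitely many variables, applied homomorphically to terms and elementwise to goals; $\mathit{Var}$ denotes the set of variables. A renaming is a substitution bijective on $X$; a variant is an image under a renaming; $\mathit{mgu}$ denotes a most general unifier. A program is a set of rules $(u,\bar v)$ with $u$ a term and $\bar v$ a goal. For a rule $r$: $\hookrightarrow_r=\{(u\theta,v\theta)\mid r=(u,\langle v\rangle),\ \mathit{Var}(v)\subseteq\mathit{Var}(u),\ \theta\text{ a substitution}\}$. For a goal $\bar s=\langle s_1,\dots,s_n\rangle$, $\bar s\leadsto_r\bar t$ iff for some $1\le i\le n$ and some variant $(u',\langle v_1,\dots,v_m\rangle)$ of $r$ variable-disjoint from $\bar s$, $s_i$ and $u'$ unify, $\eta=\mathit{mgu}(s_i,u')$, and $\bar t=\langle s_1,\dots,s_{i-1},v_1,\dots,v_m,s_{i+1},\dots,s_n\rangle\eta$. For $w=\langle r_1,\dots,r_n\rangle\in P^*$, $\hookrightarrow_w=\hookrightarrow_{r_1}\circ\cdots\circ\hookrightarrow_{r_n}$ and $\leadsto_w=\leadsto_{r_1}\circ\cdots\circ\leadsto_{r_n}$ (apply $r_1$ first), each being the identity relation when $w=\epsilon$. *)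

theory Defs
  imports "HOL-Library.Countable"
begin

datatype ('f, 'v) trm = Var 'v | Fun 'f "('f, 'v) trm list"

fun wf_trm :: "('f \<Rightarrow> nat) \<Rightarrow> ('f, 'v) trm \<Rightarrow> bool" where
  "wf_trm ar (Var x) = True"
| "wf_trm ar (Fun f ts) = (length ts = ar f \<and> (\<forall>t\<in>set ts. wf_trm ar t))"

fun vars :: "('f, 'v) trm \<Rightarrow> 'v set" where
  "vars (Var x) = {x}"
| "vars (Fun f ts) = (\<Union>t\<in>set ts. vars t)"

definition goal_vars :: "('f, 'v) trm list \<Rightarrow> 'v set" where
  "goal_vars ts = (\<Union>t\<in>set ts. vars t)"

fun subst :: "('v \<Rightarrow> ('f, 'v) trm) \<Rightarrow> ('f, 'v) trm \<Rightarrow> ('f, 'v) trm" where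
  "subst \<sigma> (Var x) = \<sigma> x"
| "subst \<sigma> (Fun f ts) = Fun f (map (subst \<sigma>) ts)"

definition is_subst :: "('f \<Rightarrow> nat) \<Rightarrow> ('v \<Rightarrow> ('f, 'v) trm) \<Rightarrow> bool" where
  "is_subst ar \<sigma> \<longleftrightarrow> finite {x. \<sigma> x \<noteq> Var x} \<and> (\<forall>x. wf_trm ar (\<sigma> x))"

definition is_renaming :: "('f \<Rightarrow> nat) \<Rightarrow> ('v \<Rightarrow> ('f, 'v) trm) \<Rightarrow> bool" where
  "is_renaming ar \<rho> \<longleftrightarrow> is_subst ar \<rho> \<and> (\<exists>\<pi>. bij \<pi> \<and> \<rho> = (\<lambda>x. Var (\<pi> x)))"

definition is_mgu :: "('f \<Rightarrow> nat) \<Rightarrow> ('v \<Rightarrow> ('f, 'v) trm) \<Rightarrow> ('f, 'v) trm \<Rightarrow> ('f, 'v) trm \<Rightarrow> bool" where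
  "is_mgu ar \<sigma> s t \<longleftrightarrow> is_subst ar \<sigma> \<and> subst \<sigma> s = subst \<sigma> t \<and>
     (\<forall>\<tau>. is_subst ar \<tau> \<and> subst \<tau> s = subst \<tau> t \<longrightarrow>
        (\<exists>\<delta>. is_subst ar \<delta> \<and> (\<forall>x. \<tau> x = subst \<delta> (\<sigma> x))))"

definition unifiable :: "('f \<Rightarrow> nat) \<Rightarrow> ('f, 'v) trm \<Rightarrow> ('f, 'v) trm \<Rightarrow> bool" where
  "unifiable ar s t \<longleftrightarrow> (\<exists>\<theta>. is_subst ar \<theta> \<and> subst \<theta> s = subst \<theta> t)"

type_synonym ('f, 'v) rule = "('f, 'v) trm \<times> ('f, 'v) trm list"

definition wf_rule :: "('f \<Rightarrow> nat) \<Rightarrow> ('f, 'v) rule \<Rightarrow> bool" where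
  "wf_rule ar r \<longleftrightarrow> wf_trm ar (fst r) \<and> (\<forall>v\<in>set (snd r). wf_trm ar v)"

definition hstep :: "('f \<Rightarrow> nat) \<Rightarrow> ('f, 'v) rule \<Rightarrow> (('f, 'v) trm \<times> ('f, 'v) trm) set" where
  "hstep ar r = {(subst \<theta> u, subst \<theta> v) | u v \<theta>.
      r = (u, [v]) \<and> vars v \<subseteq> vars u \<and> is_subst ar \<theta>}"

definition lstep :: "('f \<Rightarrow> nat) \<Rightarrow> ('f, 'v) rule \<Rightarrow> (('f, 'v) trm list \<times> ('f, 'v) trm list) set" where
  "lstep ar r = {(ss, ts) | ss ts. \<exists>i < length ss. \<exists>\<rho> \<eta>.
      is_renaming ar \<rho> \<and>
      (vars (subst \<rho> (fst r)) \<union> goal_vars (map (subst \<rho>) (snd r))) \<inter> goal_vars ss = {} \<and>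
      unifiable ar (ss ! i) (subst \<rho> (fst r)) \<and>
      is_mgu ar \<eta> (ss ! i) (subst \<rho> (fst r)) \<and>
      ts = map (subst \<eta>) (take i ss @ map (subst \<rho>) (snd r) @ drop (Suc i) ss)}"

text \<open>Composition along w = <r1,...,rn>, applying r1 first (O is diagrammatic composition).\<close>
fun hsteps :: "('f \<Rightarrow> nat) \<Rightarrow> ('f, 'v) rule list \<Rightarrow> (('f, 'v) trm \<times> ('f, 'v) trm) set" where
  "hsteps ar [] = Id"
| "hsteps ar (r # w) = hstep ar r O hsteps ar w"

fun lsteps :: "('f \<Rightarrow> nat) \<Rightarrow> ('f, 'v) rule list \<Rightarrow> (('f, 'v) trm list \<times> ('f, 'v) trm list) set" where
  "lsteps ar [] = Id"
| "lsteps ar (r # w) = lstep ar r O lsteps ar w"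

end

theory Submission
  imports Defs
begin

definition sw :: "'a \<Rightarrow> 'a \<Rightarrow> 'a \<Rightarrow> 'a" where
  "sw a b x = (if x = a then b else if x = b then a else x)"

lemma sw_invol: "sw a b (sw a b x) = x"
  by (auto simp: sw_def)

lemma bij_sw: "bij (sw a b)"
  by (metis bijI' sw_invol)

lemma finite_vars: "finite (vars t)"
  by (induction t) auto

lemma subst_comp: "subst \<sigma> (subst \<tau> t) = subst (\<lambda>x. subst \<sigma> (\<tau> x)) t"
  by (induction t) auto

lemma subst_cong: "(\<And>x. x \<in> vars t \<Longrightarrow> \<sigma> x = \<tau> x) \<Longrightarrow> subst \<sigma> t = subst \<tau> t"
  by (induction t) auto

lemma subst_eq_vars: "subst \<sigma> t = subst \<tau> t \<Longrightarrow> x \<in> vars t \<Longrightarrow> \<sigma> x = \<tau> x"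
  by (induction t) (auto simp: map_eq_conv)

lemma subst_Var: "subst Var t = t"
  by (induction t) (auto simp: map_idI)

lemma vars_rename: "vars (subst (\<lambda>x. Var (\<pi> x)) t) = \<pi> ` vars t"
  by (induction t) auto

lemma fresh_perm:
  assumes inf: "infinite (UNIV :: 'v set)" and fA: "finite (A :: 'v set)" and fS: "finite S"
  shows "\<exists>\<pi>. bij \<pi> \<and> finite {x. \<pi> x \<noteq> x} \<and> \<pi> ` A \<inter> S = {}"
  using fA
proof (induction A rule: finite_induct)
  case empty
  show ?case by (rule exI[of _ id]) (auto simp: bij_id[unfolded id_def])
next
  case (insert a A)
  then obtain \<pi> where p: "bij \<pi>" "finite {x. \<pi> x \<noteq> x}" "\<pi> ` A \<inter> S = {}" by blast
  have "finite (S \<union> \<pi> ` A \<union> {\<pi> a})" using fS insert(1) by auto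
  then obtain b where b: "b \<notin> S \<union> \<pi> ` A \<union> {\<pi> a}"
    using inf by (metis ex_new_if_finite)
  define \<pi>' where "\<pi>' = sw (\<pi> a) b \<circ> \<pi>"
  have "bij \<pi>'" unfolding \<pi>'_def using p(1) by (simp add: bij_comp bij_sw)
  moreover have "{x. \<pi>' x \<noteq> x} \<subseteq> {x. \<pi> x \<noteq> x} \<union> {a, inv \<pi> b}"
  proof
    fix x assume "x \<in> {x. \<pi>' x \<noteq> x}"
    then have ne: "\<pi>' x \<noteq> x" by simp
    show "x \<in> {x. \<pi> x \<noteq> x} \<union> {a, inv \<pi> b}"
    proof (cases "\<pi> x = \<pi> a \<or> \<pi> x = b")
      case True
      then show ?thesis using p(1)
        by (metis UnI2 bij_inv_eq_iff bij_is_inj inj_eq insertCI)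
    next
      case False
      then have "\<pi>' x = \<pi> x" unfolding \<pi>'_def by (auto simp: sw_def)
      then show ?thesis using ne by simp
    qed
  qed
  then have "finite {x. \<pi>' x \<noteq> x}" using p(2) by (meson finite.emptyI finite.insertI finite_UnI finite_subset)
  moreover have "\<pi>' ` insert a A \<inter> S = {}"
  proof -
    have "\<pi>' a = b" unfolding \<pi>'_def by (simp add: sw_def)
    moreover have "\<pi>' x = \<pi> x" if "x \<in> A" for x
    proof -
      have "\<pi> x \<noteq> \<pi> a" using that insert(2) p(1) by (metis bij_is_inj inj_eq)
      moreover have "\<pi> x \<noteq> b" using b that by auto
      ultimately show ?thesis unfolding \<pi>'_def by (auto simp: sw_def)
    qed
    ultimately show ?thesis using b p(3) by auto
  qed
  ultimately show ?case by blast
qed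

lemma one_step:
  assumes inf: "infinite (UNIV :: 'v set)"
    and h: "(s, m) \<in> hstep ar r"
  shows "([s], [m]) \<in> lstep ar (r :: ('f, 'v) rule)"
proof -
  from h obtain u v \<theta> where r: "r = (u, [v])" and vv: "vars v \<subseteq> vars u" and th: "is_subst ar \<theta>"
    and s: "s = subst \<theta> u" and m: "m = subst \<theta> v"
    unfolding hstep_def by blast
  obtain \<pi> where p: "bij \<pi>" "finite {x. \<pi> x \<noteq> x}" "\<pi> ` vars u \<inter> vars s = {}"
    using fresh_perm[OF inf finite_vars finite_vars] by blast
  define \<rho> where "\<rho> = (\<lambda>x. Var (\<pi> x) :: ('f, 'v) trm)"
  define \<theta>' where "\<theta>' = (\<lambda>x. if x \<in> \<pi> ` vars u then \<theta> (inv \<pi> x) else Var x)"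
  have ren: "is_renaming ar \<rho>"
    unfolding is_renaming_def is_subst_def \<rho>_def using p(1,2) by auto
  have vu: "vars (subst \<rho> u) = \<pi> ` vars u" unfolding \<rho>_def by (rule vars_rename)
  have vv': "vars (subst \<rho> v) \<subseteq> \<pi> ` vars u" unfolding \<rho>_def vars_rename using vv by auto
  have disj: "(vars (subst \<rho> (fst r)) \<union> goal_vars (map (subst \<rho>) (snd r))) \<inter> goal_vars [s] = {}"
    using r vu vv' p(3) by (auto simp: goal_vars_def)
  have thsub: "is_subst ar \<theta>'"
  proof -
    have "{x. \<theta>' x \<noteq> Var x} \<subseteq> \<pi> ` vars u" unfolding \<theta>'_def by auto
    then have "finite {x. \<theta>' x \<noteq> Var x}" using finite_vars by (meson finite_imageI finite_subset)
    moreover have "wf_trm ar (\<theta>' x)" for x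
      using th unfolding \<theta>'_def is_subst_def by auto
    ultimately show ?thesis unfolding is_subst_def by auto
  qed
  have inv: "inv \<pi> (\<pi> x) = x" for x using p(1) by (simp add: bij_is_inj)
  have A: "subst \<theta>' (subst \<rho> t) = subst \<theta> t" if "vars t \<subseteq> vars u" for t
    unfolding subst_comp \<rho>_def using that
    by (intro subst_cong) (auto simp: \<theta>'_def inv)
  have Au: "subst \<theta>' (subst \<rho> u) = s" using A s by simp
  have Av: "subst \<theta>' (subst \<rho> v) = m" using A[OF vv] m by simp
  have Bs: "subst \<theta>' s = s"
  proof -
    have "subst \<theta>' s = subst Var s"
      using p(3) by (intro subst_cong) (auto simp: \<theta>'_def)
    then show ?thesis by (simp add: subst_Var)
  qed
  have unif: "subst \<theta>' s = subst \<theta>' (subst \<rho> u)" using Au Bs by simp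
  have mgu: "is_mgu ar \<theta>' s (subst \<rho> u)"
    unfolding is_mgu_def
  proof (intro conjI thsub unif allI impI)
    fix \<tau> assume "is_subst ar \<tau> \<and> subst \<tau> s = subst \<tau> (subst \<rho> u)"
    then have t: "is_subst ar \<tau>" "subst \<tau> s = subst \<tau> (subst \<rho> u)" by auto
    have eq: "subst \<tau> (subst \<rho> u) = subst (\<lambda>x. subst \<tau> (\<theta>' x)) (subst \<rho> u)"
      using t(2) Au by (metis subst_comp)
    have "\<tau> x = subst \<tau> (\<theta>' x)" for x
    proof (cases "x \<in> \<pi> ` vars u")
      case True
      then show ?thesis using subst_eq_vars[OF eq] vu by auto
    next
      case False
      then show ?thesis by (simp add: \<theta>'_def)
    qed
    then show "\<exists>\<delta>. is_subst ar \<delta> \<and> (\<forall>x. \<tau> x = subst \<delta> (\<theta>' x))" using t(1) by blast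
  qed
  have "unifiable ar s (subst \<rho> u)" unfolding unifiable_def using thsub unif by blast
  moreover have "[m] = map (subst \<theta>') (take 0 [s] @ map (subst \<rho>) (snd r) @ drop (Suc 0) [s])"
    using r Av by simp
  ultimately have Y: "0 < length [s] \<and> is_renaming ar \<rho> \<and>
      (vars (subst \<rho> (fst r)) \<union> goal_vars (map (subst \<rho>) (snd r))) \<inter> goal_vars [s] = {} \<and>
      unifiable ar ([s] ! 0) (subst \<rho> (fst r)) \<and>
      is_mgu ar \<theta>' ([s] ! 0) (subst \<rho> (fst r)) \<and>
      [m] = map (subst \<theta>') (take 0 [s] @ map (subst \<rho>) (snd r) @ drop (Suc 0) [s])"
    using ren disj mgu r by (intro conjI) simp_all
  have X: "\<exists>i < length [s]. \<exists>\<rho> \<eta>. is_renaming ar \<rho> \<and>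
      (vars (subst \<rho> (fst r)) \<union> goal_vars (map (subst \<rho>) (snd r))) \<inter> goal_vars [s] = {} \<and>
      unifiable ar ([s] ! i) (subst \<rho> (fst r)) \<and>
      is_mgu ar \<eta> ([s] ! i) (subst \<rho> (fst r)) \<and>
      [m] = map (subst \<eta>) (take i [s] @ map (subst \<rho>) (snd r) @ drop (Suc i) [s])"
    by (rule exI[of _ 0], rule conjI, simp, rule exI[of _ \<rho>], rule exI[of _ \<theta>'], rule Y[THEN conjunct2])
  show ?thesis unfolding lstep_def mem_Collect_eq
    by (rule exI[of _ "[s]"], rule exI[of _ "[m]"], rule conjI[OF refl X])
qed

theorem lemma8:
  fixes ar :: "'f \<Rightarrow> nat"
    and P :: "('f, 'v :: countable) rule set"
    and s t :: "('f, 'v) trm"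
    and w :: "('f, 'v) rule list"
  assumes "infinite (UNIV :: 'v set)"
    and "\<forall>r\<in>P. wf_rule ar r"
    and "wf_trm ar s" and "wf_trm ar t"
    and "set w \<subseteq> P"
    and "(s, t) \<in> hsteps ar w"
  shows "([s], [t]) \<in> lsteps ar w"
  using assms(6)
proof (induction w arbitrary: s)
  case Nil
  then show ?case by simp
next
  case (Cons r w)
  then obtain m where "(s, m) \<in> hstep ar r" "(m, t) \<in> hsteps ar w" by auto
  then have "([s], [m]) \<in> lstep ar r" "([m], [t]) \<in> lsteps ar w"
    using one_step[OF assms(1)] Cons.IH by blast+
  then show ?case by auto
qed

end
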